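(* Let $\mathcal F$ be a $k$-uniform hypergraph on $n$ vertices with $|\mathcal F|=n^r$ edges, $r\ge1$, and let $\alpha\in(0,1]$. Suppose $\wp(\mathcal F,\alpha n)\le\min\{Bn,\ \tfrac12|\mathcal F|\}$ for some real $B>0$. Then for every $0<\gamma\le1$ with $k\le\sqrt{\gamma n}$, the expected value of $|\mathcal F_I|$, where $I$ is a uniformly random subset of the vertex set of size $\gamma n$, is at least $$\frac{1}{C'}\cdot\frac{|\mathcal F|}{B^{1-\log_2(1+\gamma)}},\qquad C'=(8k/(\alpha\gamma))^{\lceil 5r\rceil}\log_2 n.$$
   Context: For a hypergraph $\mathcal F$ and vertex set $I$, the trace is $\mathcal F_I=\{e\cap I:e\in\mathcal F\}$, the induced sub-hypergraph is $\mathcal F[I]=\{e\in\mathcal F:e\subseteq I\}$, and $\wp(\mathcal F,i)=\max_{|I|=i}|\mathcal F[I]|$. Quantities $\alpha n,\gamma n$ are rounded to integers; $n$ is assumed sufficiently large. *)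

theory Defs
  imports Complex_Main
begin

definition trace :: "'a set set \<Rightarrow> 'a set \<Rightarrow> 'a set set" where
  "trace F I = (\<lambda>e. e \<inter> I) ` F"

definition induced :: "'a set set \<Rightarrow> 'a set \<Rightarrow> 'a set set" where
  "induced F I = {e \<in> F. e \<subseteq> I}"

definition wp :: "'a set set \<Rightarrow> 'a set \<Rightarrow> nat \<Rightarrow> nat" where
  "wp F V i = Max {card (induced F I) | I. I \<subseteq> V \<and> card I = i}"

definition uniform_hypergraph :: "nat \<Rightarrow> 'a set \<Rightarrow> 'a set set \<Rightarrow> bool" where
  "uniform_hypergraph k V F \<longleftrightarrow> (\<forall>e\<in>F. e \<subseteq> V \<and> card e = k)"

definition rnd :: "real \<Rightarrow> nat" where
  "rnd x = nat (round x)"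

definition expected_trace :: "'a set set \<Rightarrow> 'a set \<Rightarrow> nat \<Rightarrow> real" where
  "expected_trace F V s =
     (\<Sum>I\<in>{I. I \<subseteq> V \<and> card I = s}. real (card (trace F I)))
       / real (card {I. I \<subseteq> V \<and> card I = s})"

end

theory Submission
  imports Defs
begin


lemma count_sup:
  assumes V: "finite V" and e: "e \<subseteq> V" "card e = k" and ks: "k \<le> s"
  shows "card {I. I \<subseteq> V \<and> card I = s \<and> e \<subseteq> I} = (card V - k) choose (s - k)"
proof -
  have fe: "finite e" using V e finite_subset by blast
  have "bij_betw (\<lambda>I. I - e) {I. I \<subseteq> V \<and> card I = s \<and> e \<subseteq> I} {J. J \<subseteq> V - e \<and> card J = s - k}"
  proof (rule bij_betw_byWitness[where f'="\<lambda>J. J \<union> e"])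
    show "\<forall>a\<in>{I. I \<subseteq> V \<and> card I = s \<and> e \<subseteq> I}. a - e \<union> e = a" by auto
    show "\<forall>a'\<in>{J. J \<subseteq> V - e \<and> card J = s - k}. a' \<union> e - e = a'" by auto
    show "(\<lambda>I. I - e) ` {I. I \<subseteq> V \<and> card I = s \<and> e \<subseteq> I} \<subseteq> {J. J \<subseteq> V - e \<and> card J = s - k}"
    proof safe
      fix I x assume "I \<subseteq> V" "e \<subseteq> I" "s = card I"
      then show "card (I - e) = card I - k" using e fe by (simp add: card_Diff_subset)
    qed auto
    show "(\<lambda>J. J \<union> e) ` {J. J \<subseteq> V - e \<and> card J = s - k} \<subseteq> {I. I \<subseteq> V \<and> card I = s \<and> e \<subseteq> I}"
    proof
      fix x assume "x \<in> (\<lambda>J. J \<union> e) ` {J. J \<subseteq> V - e \<and> card J = s - k}"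
      then obtain J where J: "J \<subseteq> V - e" "card J = s - k" and x: "x = J \<union> e" by auto
      have fJ: "finite J" using J V finite_subset by blast
      have "card (J \<union> e) = card J + card e" using J fJ fe by (intro card_Un_disjoint) auto
      then have "card x = s" using J e ks x by simp
      then show "x \<in> {I. I \<subseteq> V \<and> card I = s \<and> e \<subseteq> I}" using J e x by auto
    qed
  qed
  then have "card {I. I \<subseteq> V \<and> card I = s \<and> e \<subseteq> I} = card {J. J \<subseteq> V - e \<and> card J = s - k}"
    by (rule bij_betw_same_card)
  also have "\<dots> = card (V - e) choose (s - k)" using V by (intro n_subsets) auto
  also have "card (V - e) = card V - k" using e fe by (simp add: card_Diff_subset)
  finally show ?thesis .
qed

lemma count_pt:
  assumes V: "finite V" and e: "e \<subseteq> V" "card e = k" "v \<in> e" and s1: "1 \<le> s"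
  shows "card {I. I \<subseteq> V \<and> card I = s \<and> v \<in> I \<and> I \<inter> (e - {v}) = {}} = (card V - k) choose (s - 1)"
proof -
  have fe: "finite e" using V e finite_subset by blast
  have "bij_betw (\<lambda>I. I - {v}) {I. I \<subseteq> V \<and> card I = s \<and> v \<in> I \<and> I \<inter> (e - {v}) = {}} {J. J \<subseteq> V - e \<and> card J = s - 1}"
  proof (rule bij_betw_byWitness[where f'="\<lambda>J. insert v J"])
    show "\<forall>a\<in>{I. I \<subseteq> V \<and> card I = s \<and> v \<in> I \<and> I \<inter> (e - {v}) = {}}. insert v (a - {v}) = a" by auto
    show "\<forall>a'\<in>{J. J \<subseteq> V - e \<and> card J = s - 1}. insert v a' - {v} = a'" using e by auto
    show "(\<lambda>I. I - {v}) ` {I. I \<subseteq> V \<and> card I = s \<and> v \<in> I \<and> I \<inter> (e - {v}) = {}} \<subseteq> {J. J \<subseteq> V - e \<and> card J = s - 1}"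
    proof
      fix x assume "x \<in> (\<lambda>I. I - {v}) ` {I. I \<subseteq> V \<and> card I = s \<and> v \<in> I \<and> I \<inter> (e - {v}) = {}}"
      then obtain I where I: "I \<subseteq> V" "card I = s" "v \<in> I" "I \<inter> (e - {v}) = {}" and x: "x = I - {v}" by auto
      have "card x = s - 1" using I x by simp
      moreover have "x \<subseteq> V - e" using I x by auto
      ultimately show "x \<in> {J. J \<subseteq> V - e \<and> card J = s - 1}" by auto
    qed
    show "(\<lambda>J. insert v J) ` {J. J \<subseteq> V - e \<and> card J = s - 1} \<subseteq> {I. I \<subseteq> V \<and> card I = s \<and> v \<in> I \<and> I \<inter> (e - {v}) = {}}"
    proof
      fix x assume "x \<in> (\<lambda>J. insert v J) ` {J. J \<subseteq> V - e \<and> card J = s - 1}"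
      then obtain J where J: "J \<subseteq> V - e" "card J = s - 1" and x: "x = insert v J" by auto
      have fJ: "finite J" using J V finite_subset by blast
      have "v \<notin> J" using J e by auto
      then have "card x = s" using J fJ x s1 by simp
      then show "x \<in> {I. I \<subseteq> V \<and> card I = s \<and> v \<in> I \<and> I \<inter> (e - {v}) = {}}" using J e x by auto
    qed
  qed
  then have "card {I. I \<subseteq> V \<and> card I = s \<and> v \<in> I \<and> I \<inter> (e - {v}) = {}} = card {J. J \<subseteq> V - e \<and> card J = s - 1}"
    by (rule bij_betw_same_card)
  also have "\<dots> = card (V - e) choose (s - 1)" using V by (intro n_subsets) auto
  also have "card (V - e) = card V - k" using e fe by (simp add: card_Diff_subset)
  finally show ?thesis .
qed

lemma finite_F:
  assumes "finite V" "uniform_hypergraph k V F"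
  shows "finite F"
proof -
  have "F \<subseteq> Pow V" using assms unfolding uniform_hypergraph_def by auto
  then show ?thesis using assms finite_subset by blast
qed

lemma sum_induced:
  assumes V: "finite V" and U: "uniform_hypergraph k V F" and ks: "k \<le> s"
  shows "(\<Sum>I\<in>{I. I \<subseteq> V \<and> card I = s}. card (induced F I)) = card F * ((card V - k) choose (s - k))"
proof -
  have fF: "finite F" using finite_F[OF V U] .
  have fS: "finite {I. I \<subseteq> V \<and> card I = s}" using V by simp
  have "(\<Sum>I\<in>{I. I \<subseteq> V \<and> card I = s}. card (induced F I))
      = (\<Sum>I\<in>{I. I \<subseteq> V \<and> card I = s}. \<Sum>e\<in>F. if e \<subseteq> I then 1 else 0)"
    unfolding induced_def using fF by (intro sum.cong refl) (simp add: sum.inter_filter[symmetric])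
  also have "\<dots> = (\<Sum>e\<in>F. \<Sum>I\<in>{I. I \<subseteq> V \<and> card I = s}. if e \<subseteq> I then 1 else 0)"
    by (rule sum.swap)
  also have "\<dots> = (\<Sum>e\<in>F. (card V - k) choose (s - k))"
  proof (intro sum.cong refl)
    fix e assume eF: "e \<in> F"
    have "(\<Sum>I\<in>{I. I \<subseteq> V \<and> card I = s}. if e \<subseteq> I then 1 else 0) = card {I \<in> {I. I \<subseteq> V \<and> card I = s}. e \<subseteq> I}"
      using fS by (simp add: sum.inter_filter[symmetric])
    also have "{I \<in> {I. I \<subseteq> V \<and> card I = s}. e \<subseteq> I} = {I. I \<subseteq> V \<and> card I = s \<and> e \<subseteq> I}" by auto
    also have "card \<dots> = (card V - k) choose (s - k)"
      using eF U ks V by (intro count_sup) (auto simp: uniform_hypergraph_def)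
    finally show "(\<Sum>I\<in>{I. I \<subseteq> V \<and> card I = s}. if e \<subseteq> I then 1 else 0) = (card V - k) choose (s - k)" .
  qed
  also have "\<dots> = card F * ((card V - k) choose (s - k))" by simp
  finally show ?thesis .
qed

lemma induced_le_trace:
  assumes "finite F"
  shows "card (induced F I) \<le> card (trace F I)"
proof -
  have "induced F I \<subseteq> trace F I" unfolding induced_def trace_def
  proof
    fix e assume "e \<in> {e \<in> F. e \<subseteq> I}"
    then have "e \<in> F" "e \<inter> I = e" by auto
    then show "e \<in> (\<lambda>e. e \<inter> I) ` F" by (metis image_eqI)
  qed
  then show ?thesis using assms by (intro card_mono) (auto simp: trace_def)
qed

lemma sum_pt:
  assumes V: "finite V" and U: "uniform_hypergraph k V F" and s1: "1 \<le> s"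
  shows "(\<Sum>I\<in>{I. I \<subseteq> V \<and> card I = s}. card (trace F I)) \<ge> card (\<Union>F) * ((card V - k) choose (s - 1))"
proof -
  define ch where "ch v = (SOME e. e \<in> F \<and> v \<in> e)" for v
  have ch: "ch v \<in> F \<and> v \<in> ch v" if vU0: "v \<in> \<Union>F" for v
  proof -
    obtain e where "e \<in> F" "v \<in> e" using vU0 by blast
    then show ?thesis unfolding ch_def by (metis (mono_tags, lifting) someI)
  qed
  have fF: "finite F" using finite_F[OF V U] .
  have fS: "finite {I. I \<subseteq> V \<and> card I = s}" using V by simp
  have fU: "finite (\<Union>F)" proof -
    have "\<Union>F \<subseteq> V" using U unfolding uniform_hypergraph_def by auto
    then show ?thesis using V finite_subset by blast
  qed
  define P where "P I v \<longleftrightarrow> v \<in> I \<and> I \<inter> (ch v - {v}) = {}" for I v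
  have le: "card {v \<in> \<Union>F. P I v} \<le> card (trace F I)" for I
  proof -
    have "(\<lambda>v. {v}) ` {v \<in> \<Union>F. P I v} \<subseteq> trace F I"
    proof
      fix x assume "x \<in> (\<lambda>v. {v}) ` {v \<in> \<Union>F. P I v}"
      then obtain v where v: "v \<in> \<Union>F" "P I v" and x: "x = {v}" by auto
      have "ch v \<inter> I = {v}" using v ch[OF v(1)] unfolding P_def by auto
      then show "x \<in> trace F I" unfolding trace_def using ch[OF v(1)] x by (metis image_eqI)
    qed
    moreover have "finite (trace F I)" using fF by (simp add: trace_def)
    ultimately have "card ((\<lambda>v. {v}) ` {v \<in> \<Union>F. P I v}) \<le> card (trace F I)" by (simp add: card_mono)
    moreover have "card ((\<lambda>v. {v}) ` {v \<in> \<Union>F. P I v}) = card {v \<in> \<Union>F. P I v}"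
      by (intro card_image) (auto simp: inj_on_def)
    ultimately show ?thesis by simp
  qed
  have "(\<Sum>I\<in>{I. I \<subseteq> V \<and> card I = s}. card {v \<in> \<Union>F. P I v})
      = (\<Sum>I\<in>{I. I \<subseteq> V \<and> card I = s}. \<Sum>v\<in>\<Union>F. if P I v then 1 else 0)"
    using fU by (intro sum.cong refl) (simp add: sum.inter_filter[symmetric])
  also have "\<dots> = (\<Sum>v\<in>\<Union>F. \<Sum>I\<in>{I. I \<subseteq> V \<and> card I = s}. if P I v then 1 else 0)"
    by (rule sum.swap)
  also have "\<dots> = (\<Sum>v\<in>\<Union>F. (card V - k) choose (s - 1))"
  proof (intro sum.cong refl)
    fix v assume vU: "v \<in> \<Union>F"
    have "(\<Sum>I\<in>{I. I \<subseteq> V \<and> card I = s}. if P I v then 1 else 0) = card {I \<in> {I. I \<subseteq> V \<and> card I = s}. P I v}"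
      using fS by (simp add: sum.inter_filter[symmetric])
    also have "{I \<in> {I. I \<subseteq> V \<and> card I = s}. P I v} = {I. I \<subseteq> V \<and> card I = s \<and> v \<in> I \<and> I \<inter> (ch v - {v}) = {}}"
      unfolding P_def by auto
    also have "card \<dots> = (card V - k) choose (s - 1)"
    proof -
      have "ch v \<subseteq> V" "card (ch v) = k" using ch[OF vU] U unfolding uniform_hypergraph_def by auto
      then show ?thesis using count_pt[OF V _ _ _ s1, of "ch v" k v] ch[OF vU] by blast
    qed
    finally show "(\<Sum>I\<in>{I. I \<subseteq> V \<and> card I = s}. if P I v then 1 else 0) = (card V - k) choose (s - 1)" .
  qed
  also have "\<dots> = card (\<Union>F) * ((card V - k) choose (s - 1))" by simp
  finally have eq: "(\<Sum>I\<in>{I. I \<subseteq> V \<and> card I = s}. card {v \<in> \<Union>F. P I v}) = card (\<Union>F) * ((card V - k) choose (s - 1))" .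
  have "(\<Sum>I\<in>{I. I \<subseteq> V \<and> card I = s}. card {v \<in> \<Union>F. P I v}) \<le> (\<Sum>I\<in>{I. I \<subseteq> V \<and> card I = s}. card (trace F I))"
    by (intro sum_mono le)
  with eq show ?thesis by simp
qed


lemma wp_ge:
  assumes V: "finite V" and J: "J \<subseteq> V" "card J = m"
  shows "card (induced F J) \<le> wp F V m"
proof -
  have "{card (induced F I) | I. I \<subseteq> V \<and> card I = m} = (\<lambda>I. card (induced F I)) ` {I. I \<subseteq> V \<and> card I = m}" by auto
  then have fin: "finite {card (induced F I) | I. I \<subseteq> V \<and> card I = m}" using V by simp
  show ?thesis unfolding wp_def by (rule Max_ge[OF fin]) (use J in auto)
qed

lemma wp_avg:
  assumes V: "finite V" and U: "uniform_hypergraph k V F" and km: "k \<le> m"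
  shows "card F * ((card V - k) choose (m - k)) \<le> wp F V m * (card V choose m)"
proof -
  have "card F * ((card V - k) choose (m - k)) = (\<Sum>I\<in>{I. I \<subseteq> V \<and> card I = m}. card (induced F I))"
    using sum_induced[OF V U km] by simp
  also have "\<dots> \<le> (\<Sum>I\<in>{I. I \<subseteq> V \<and> card I = m}. wp F V m)"
    by (intro sum_mono wp_ge[OF V]) auto
  also have "\<dots> = wp F V m * (card V choose m)" using n_subsets[OF V, of m] by simp
  finally show ?thesis .
qed

lemma supp_big:
  assumes V: "finite V" and U: "uniform_hypergraph k V F" and mn: "m \<le> card V"
    and w: "real (wp F V m) \<le> real (card F) / 2" and ne: "F \<noteq> {}"
  shows "m < card (\<Union>F)"
proof (rule ccontr)
  assume "\<not> m < card (\<Union>F)"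
  then have le: "card (\<Union>F) \<le> m" by simp
  have sub: "\<Union>F \<subseteq> V" using U unfolding uniform_hypergraph_def by auto
  obtain J where J: "\<Union>F \<subseteq> J" "J \<subseteq> V" "card J = m" using exists_subset_between[OF le mn sub V] by blast
  have "induced F J = F" using J unfolding induced_def by auto
  then have "card F \<le> wp F V m" using wp_ge[OF V J(2,3), of F] by simp
  moreover have "card F > 0" using ne finite_F[OF V U] by (simp add: card_gt_0_iff)
  ultimately show False using w by linarith
qed

lemma binom_pascal_sum:
  assumes "1 \<le> b" "j \<le> a"
  shows "a choose b \<le> ((a - j) choose b) + j * ((a - 1) choose (b - 1))"
  using assms(2)
proof (induction j)
  case 0 then show ?case by simp
next
  case (Suc j)
  have aj: "a - j = Suc (a - Suc j)" using Suc.prems by simp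
  have bb: "b = Suc (b - 1)" using assms(1) by simp
  have "(a - j) choose b = ((a - Suc j) choose (b - 1)) + ((a - Suc j) choose b)"
  proof -
    have "(a - j) choose b = (Suc (a - Suc j)) choose (Suc (b - 1))" using aj bb by simp
    also have "\<dots> = ((a - Suc j) choose (b - 1)) + ((a - Suc j) choose (Suc (b - 1)))" by (rule binomial_Suc_Suc)
    finally show ?thesis using bb by simp
  qed
  moreover have "(a - Suc j) choose (b - 1) \<le> (a - 1) choose (b - 1)"
    by (intro binomial_right_mono) simp
  ultimately show ?case using Suc by simp
qed

lemma P2_bound:
  assumes s1: "1 \<le> s" and sn: "s \<le> n" and kn: "k \<le> n" and k1: "1 \<le> k"
    and small: "2 * (k - 1) * (s - 1) \<le> n - 1"
  shows "s * (n choose s) \<le> 2 * n * ((n - k) choose (s - 1))"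
proof (cases "s = 1")
  case True
  then show ?thesis by simp
next
  case False
  define a where "a = n - 1"
  define b where "b = s - 1"
  define j where "j = k - 1"
  have b1: "1 \<le> b" using False s1 unfolding b_def by simp
  have ja: "j \<le> a" using kn k1 unfolding a_def j_def by simp
  have ba: "b \<le> a" using sn unfolding a_def b_def by simp
  have a0: "0 < a" using b1 ba by simp
  have 1: "a choose b \<le> ((a - j) choose b) + j * ((a - 1) choose (b - 1))"
    by (rule binom_pascal_sum[OF b1 ja])
  have 2: "a * ((a - 1) choose (b - 1)) = b * (a choose b)"
    using times_binomial_minus1_eq[of b a] b1 by simp
  have "2 * a * (a choose b) \<le> 2 * a * ((a - j) choose b) + 2 * j * (a * ((a - 1) choose (b - 1)))"
  proof -
    have "2 * a * (a choose b) \<le> 2 * a * (((a - j) choose b) + j * ((a - 1) choose (b - 1)))"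
      using 1 by (rule mult_le_mono2)
    then show ?thesis by (simp add: algebra_simps)
  qed
  also have "\<dots> = 2 * a * ((a - j) choose b) + (2 * j * b) * (a choose b)" using 2 by (simp add: algebra_simps)
  also have "\<dots> \<le> 2 * a * ((a - j) choose b) + a * (a choose b)"
  proof -
    have "2 * j * b \<le> a" using small unfolding a_def b_def j_def by simp
    then have "(2 * j * b) * (a choose b) \<le> a * (a choose b)" by (rule mult_le_mono1)
    then show ?thesis by simp
  qed
  finally have "a * (a choose b) \<le> a * (2 * ((a - j) choose b))" by simp
  then have 3: "a choose b \<le> 2 * ((a - j) choose b)" using a0 by simp
  have 4: "s * (n choose s) = n * (a choose b)"
    using times_binomial_minus1_eq[of s n] s1 unfolding a_def b_def by simp
  have "a - j = n - k" unfolding a_def j_def using k1 kn by simp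
  moreover have "n * (a choose b) \<le> n * (2 * ((a - j) choose b))" using 3 by (rule mult_le_mono2)
  ultimately show ?thesis using 4 unfolding b_def by (simp add: mult.assoc mult.left_commute)
qed



lemma log2_le: fixes g :: real assumes "0 \<le> g" shows "log 2 (1 + g) \<le> 2 * g"
proof -
  have "ln (1/2::real) \<le> 1/2 - 1" by (rule ln_le_minus_one) simp
  then have l2: "ln (2::real) \<ge> 1/2" by (simp add: ln_div)
  have "ln (1 + g) \<le> g" using ln_le_minus_one[of "1+g"] assms by simp
  moreover have "0 \<le> ln (1 + g)" using assms by simp
  moreover have "g * 1 \<le> g * (2 * ln 2)" using l2 assms by (intro mult_left_mono) auto
  ultimately have "ln (1 + g) \<le> 2 * g * ln 2" by simp
  then show ?thesis unfolding log_def using l2 by (simp add: divide_le_eq)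
qed

lemma ln_le_powr: fixes x a :: real assumes "1 \<le> x" "0 < a" shows "a * ln x \<le> x powr a"
proof -
  have "0 < x powr a" using assms by (simp add: powr_gt_zero)
  then have "ln (x powr a) \<le> x powr a - 1" by (rule ln_le_minus_one)
  then show ?thesis using assms by simp
qed

lemma analytic:
  fixes k R :: nat and r \<alpha> n \<gamma> L q0 :: real
  assumes k1: "1 \<le> k" and R1: "1 \<le> R" and r1: "1 \<le> r" and \<alpha>: "0 < \<alpha>" "\<alpha> \<le> 1"
    and q0: "q0 = (\<alpha> / (2 * real k)) ^ k"
    and n2: "2 \<le> n" and L: "L = log 2 n"
    and LM: "(4 * real k) ^ k / ((8 * real k / \<alpha>) ^ R / (2 * real k) ^ k * q0) \<le> L"
            "3 / (\<alpha> / 8 * (8 * real k / \<alpha>) ^ R * q0) \<le> L"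
    and \<gamma>: "0 < \<gamma>" "\<gamma> \<le> 1"
  shows "1 \<le> (\<gamma> / (2 * real k)) ^ k * ((8 * real k / (\<alpha> * \<gamma>)) ^ R * L) * (n powr ((r - 1) * (1 - log 2 (1 + \<gamma>))) * q0)
    \<or> (\<gamma> < 1 / (4 * real k) \<and> n powr r \<le> (\<alpha> * \<gamma> * n / 8) * ((8 * real k / (\<alpha> * \<gamma>)) ^ R * L) * (n powr ((r - 1) * (1 - log 2 (1 + \<gamma>))) * q0))"
proof -
  define e where "e = 1 - log 2 (1 + \<gamma>)"
  define T where "T = n powr ((r - 1) * e)"
  define c0 where "c0 = (8 * real k / \<alpha>) ^ R / (2 * real k) ^ k * q0"
  define c3 where "c3 = \<alpha> / 8 * (8 * real k / \<alpha>) ^ R * q0"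
  have kpos: "0 < real k" using k1 by simp
  have q0pos: "0 < q0" using q0 \<alpha> kpos by simp
  have c0pos: "0 < c0" unfolding c0_def using q0pos \<alpha> kpos by simp
  have c3pos: "0 < c3" unfolding c3_def using q0pos \<alpha> kpos by simp
  have lg0: "0 \<le> log 2 (1 + \<gamma>)" using \<gamma> by simp
  have lg1: "log 2 (1 + \<gamma>) \<le> 1" using \<gamma> by simp
  have e01: "0 \<le> e" "e \<le> 1" unfolding e_def using lg0 lg1 by auto
  have T1: "1 \<le> T" unfolding T_def using n2 r1 e01 by (intro ge_one_powr_ge_zero) auto
  have Lpos: "1 \<le> L" unfolding L using n2 by (subst le_log_iff) auto
  have gR: "\<gamma> ^ R \<le> \<gamma>" using power_decreasing[of 1 R \<gamma>] R1 \<gamma> by simp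
  have gRpos: "0 < \<gamma> ^ R" using \<gamma> by simp
  have eq1: "(\<gamma> / (2 * real k)) ^ k * ((8 * real k / (\<alpha> * \<gamma>)) ^ R * L) * (T * q0) = c0 * (\<gamma> ^ k / \<gamma> ^ R) * L * T"
    unfolding c0_def using \<gamma> \<alpha> kpos by (simp add: power_divide power_mult_distrib field_simps)
  have eq2: "(\<alpha> * \<gamma> * n / 8) * ((8 * real k / (\<alpha> * \<gamma>)) ^ R * L) * (T * q0) = c3 * (\<gamma> / \<gamma> ^ R) * L * (n * T)"
    unfolding c3_def using \<gamma> \<alpha> kpos by (simp add: power_divide power_mult_distrib field_simps)
  have c0L: "1 \<le> c0 * L"
  proof -
    have "(1::real) \<le> (4 * real k) ^ k" using k1 by (intro one_le_power) simp
    then have "1 / c0 \<le> L" using LM(1) c0pos unfolding c0_def[symmetric] by (smt (verit) divide_right_mono)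
    then show ?thesis using c0pos by (simp add: divide_le_eq mult.commute)
  qed
  have main: "1 \<le> c0 * (\<gamma> ^ k / \<gamma> ^ R) * L * T \<or> (\<gamma> < 1 / (4 * real k) \<and> n powr r \<le> c3 * (\<gamma> / \<gamma> ^ R) * L * (n * T))"
  proof (cases "\<gamma> < 1 / (4 * real k)")
    case False
    have "(1 / (4 * real k)) ^ k \<le> \<gamma> ^ k" using False kpos by (intro power_mono) auto
    also have "\<gamma> ^ k \<le> \<gamma> ^ k / \<gamma> ^ R" using gRpos \<gamma> power_le_one[of \<gamma> R]
      by (simp add: le_divide_eq mult_left_le)
    finally have g: "(1 / (4 * real k)) ^ k \<le> \<gamma> ^ k / \<gamma> ^ R" .
    have "1 \<le> c0 * ((1 / (4 * real k)) ^ k) * L"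
    proof -
      have "(4 * real k) ^ k / c0 \<le> L" using LM(1) unfolding c0_def .
      then have "(4 * real k) ^ k \<le> c0 * L" using c0pos by (simp add: divide_le_eq mult.commute)
      then show ?thesis using kpos by (simp add: power_divide field_simps)
    qed
    also have "\<dots> \<le> c0 * (\<gamma> ^ k / \<gamma> ^ R) * L * T"
    proof -
      have "c0 * ((1 / (4 * real k)) ^ k) * L \<le> c0 * (\<gamma> ^ k / \<gamma> ^ R) * L"
        using g c0pos Lpos by (intro mult_right_mono mult_left_mono) auto
      also have "\<dots> \<le> c0 * (\<gamma> ^ k / \<gamma> ^ R) * L * T"
      proof -
        have "0 \<le> c0 * (\<gamma> ^ k / \<gamma> ^ R) * L" using c0pos Lpos gRpos \<gamma> by simp
        then show ?thesis using mult_left_mono[OF T1, of "c0 * (\<gamma> ^ k / \<gamma> ^ R) * L"] by simp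
      qed
      finally show ?thesis .
    qed
    finally show ?thesis by simp
  next
    case True
    have c0L': "(4 * real k) ^ k \<le> c0 * L"
      using LM(1) c0pos unfolding c0_def[symmetric] by (simp add: divide_le_eq mult.commute)
    have c3L: "3 \<le> c3 * L"
      using LM(2) c3pos unfolding c3_def[symmetric] by (simp add: divide_le_eq mult.commute)
    have lgg: "log 2 (1 + \<gamma>) \<le> 2 * \<gamma>" using log2_le \<gamma> by simp
    have ehalf: "1/2 \<le> e"
    proof -
      have "4 * \<gamma> \<le> 4 * \<gamma> * real k" using k1 \<gamma> by (simp add: mult_le_cancel_left1)
      moreover have "4 * \<gamma> * real k < 1" using True kpos by (simp add: field_simps)
      ultimately have "2 * \<gamma> \<le> 1/2" by simp
      then show ?thesis unfolding e_def using lgg by simp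
    qed
    have c0nn: "0 \<le> c0 * L" using c0pos Lpos by simp
    show ?thesis
    proof (cases "k \<le> R")
      case True
      have "\<gamma> ^ R \<le> \<gamma> ^ k" using power_decreasing[OF True, of \<gamma>] \<gamma> by simp
      then have g1: "1 \<le> \<gamma> ^ k / \<gamma> ^ R" using gRpos by simp
      have "1 \<le> c0 * L" by (rule c0L)
      also have "\<dots> \<le> c0 * L * ((\<gamma> ^ k / \<gamma> ^ R) * T)"
        using c0nn mult_left_mono[of 1 "(\<gamma> ^ k / \<gamma> ^ R) * T" "c0 * L"] g1 T1
        by (smt (verit) mult_mono mult_cancel_right1)
      finally show ?thesis by (simp add: mult_ac)
    next
      case False
      define d where "d = k - R"
      have d1: "1 \<le> d" "d \<le> k" using False unfolding d_def by auto
      have gd: "\<gamma> ^ k / \<gamma> ^ R = \<gamma> ^ d" unfolding d_def using False \<gamma> by (simp add: power_diff)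
      show ?thesis
      proof (cases "2 * (r - 1) * \<gamma> * ln n \<le> 1")
        case True
        have lnn: "0 \<le> ln n" using n2 by simp
        have ex: "(r - 1) * (1 - e) * ln n \<le> 1"
        proof -
          have "(r - 1) * (1 - e) * ln n \<le> (r - 1) * (2 * \<gamma>) * ln n"
            unfolding e_def using lgg r1 lnn by (intro mult_right_mono mult_left_mono) auto
          then show ?thesis using True by (simp add: mult_ac)
        qed
        have p3: "n powr ((r - 1) * (1 - e)) \<le> 3"
        proof -
          have "n powr ((r - 1) * (1 - e)) = exp ((r - 1) * (1 - e) * ln n)" using n2 by (simp add: powr_def mult_ac)
          also have "\<dots> \<le> exp 1" using ex by simp
          also have "\<dots> \<le> 3" by (rule exp_le)
          finally show ?thesis .
        qed
        have g1: "1 \<le> \<gamma> / \<gamma> ^ R" using gR gRpos by simp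
        have "n powr r = n powr ((r - 1) * (1 - e)) * (n * T)"
          unfolding T_def using n2 by (simp add: powr_add[symmetric] algebra_simps powr_mult_base)
        also have "\<dots> \<le> 3 * (n * T)" using p3 T1 n2 by (intro mult_right_mono) auto
        also have "\<dots> \<le> (c3 * L) * (n * T)" using c3L T1 n2 by (intro mult_right_mono) auto
        also have "\<dots> \<le> (c3 * L) * (n * T) * (\<gamma> / \<gamma> ^ R)"
        proof -
          have "0 \<le> (c3 * L) * (n * T)" using c3pos Lpos T1 n2 by simp
          then show ?thesis using mult_left_mono[OF g1, of "(c3 * L) * (n * T)"] by simp
        qed
        finally show ?thesis using \<open>\<gamma> < 1 / (4 * real k)\<close> by (simp add: mult_ac)
      next
        case False
        have rg: "1 < r" using False \<gamma> r1 by (cases "r = 1") auto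
        define a where "a = (r - 1) / (2 * d)"
        have apos: "0 < a" unfolding a_def using rg d1 by simp
        have "a * ln n \<le> n powr a" using ln_le_powr[of n a] n2 apos by simp
        then have "2 * (r - 1) * ln n \<le> 4 * d * n powr a"
          unfolding a_def using d1 by (simp add: field_simps)
        then have "1 < \<gamma> * (4 * d * n powr a)" using False \<gamma>
          by (smt (verit, best) mult_left_mono mult.commute mult.left_commute)
        then have "1 \<le> (\<gamma> * (4 * d * n powr a)) ^ d" by (simp add: one_le_power)
        also have "\<dots> = \<gamma> ^ d * (4 * real d) ^ d * n powr ((r - 1) / 2)"
        proof -
          have "(n powr a) ^ d = n powr (a * d)" using n2 by (simp add: powr_realpow[symmetric] powr_powr)
          moreover have "a * d = (r - 1) / 2" unfolding a_def using d1 by simp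
          ultimately show ?thesis by (simp add: power_mult_distrib)
        qed
        also have "\<dots> \<le> \<gamma> ^ d * (4 * real d) ^ d * T"
        proof -
          have "(r - 1) * (1/2) \<le> (r - 1) * e" using r1 ehalf by (intro mult_left_mono) auto
          then have "n powr ((r - 1) / 2) \<le> T" unfolding T_def using n2
            by (intro powr_mono) auto
          then show ?thesis using \<gamma> by (intro mult_left_mono) auto
        qed
        also have "\<dots> \<le> \<gamma> ^ d * (c0 * L) * T"
        proof -
          have "(4 * real d) ^ d \<le> (4 * real k) ^ d" using d1 by (intro power_mono) auto
          also have "\<dots> \<le> (4 * real k) ^ k" using d1 k1 by (intro power_increasing) auto
          finally have "(4 * real d) ^ d \<le> c0 * L" using c0L' by simp
          then show ?thesis using \<gamma> T1 by (intro mult_right_mono mult_left_mono) auto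
        qed
        finally show ?thesis using gd by (simp add: mult_ac)
      qed
    qed
  qed
  then show ?thesis using eq1 eq2 unfolding T_def e_def by simp
qed



lemma ratio_bound:
  assumes ks: "k \<le> s" and sn: "s \<le> n" and n0: "0 < n"
  shows "(real s / (real k * real n)) ^ k \<le> real ((n - k) choose (s - k)) / real (n choose s)"
proof -
  have cm: "real (n choose s) * real (s choose k) = real (n choose k) * real ((n - k) choose (s - k))"
    using choose_mult[OF ks sn] by (metis of_nat_mult)
  have ns: "0 < real (n choose s)" using sn by simp
  have nk: "0 < real (n choose k)" using ks sn by simp
  have eq: "real ((n - k) choose (s - k)) / real (n choose s) = real (s choose k) / real (n choose k)"
    using cm ns nk by (simp add: field_simps)
  have 1: "(real s / real k) ^ k \<le> real (s choose k)" using binomial_ge_n_over_k_pow_k[OF ks] by simp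
  have 2: "real (n choose k) \<le> real n ^ k" using binomial_le_pow[of k n] ks sn
    by (metis le_trans of_nat_le_iff of_nat_power)
  have "(real s / (real k * real n)) ^ k = (real s / real k) ^ k / real n ^ k"
    by (simp add: power_divide power_mult_distrib)
  also have "\<dots> \<le> real (s choose k) / real n ^ k" using 1 n0 by (intro divide_right_mono) auto
  also have "\<dots> \<le> real (s choose k) / real (n choose k)" using 2 nk n0 by (intro divide_left_mono) auto
  finally show ?thesis using eq by simp
qed


lemma rnd_facts:
  assumes "0 \<le> x"
  shows "x - 1/2 \<le> real (rnd x)" "real (rnd x) \<le> x + 1/2"
proof -
  have "0 \<le> round x" using round_mono[OF assms] by simp
  then have "real (rnd x) = real_of_int (round x)" unfolding rnd_def by simp
  then show "x - 1/2 \<le> real (rnd x)" "real (rnd x) \<le> x + 1/2"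
    using of_int_round_ge[of x] of_int_round_le[of x] by simp_all
qed

lemma rnd_le:
  assumes "x \<le> real n"
  shows "rnd x \<le> n"
proof -
  have "round x \<le> round (real n)" by (rule round_mono[OF assms])
  then show ?thesis unfolding rnd_def by simp
qed

lemma rnd_ge:
  assumes "real n \<le> x"
  shows "n \<le> rnd x"
proof -
  have "round (real n) \<le> round x" by (rule round_mono[OF assms])
  then show ?thesis unfolding rnd_def by simp
qed

theorem corollary2p8:
  fixes k :: nat and r \<alpha> :: real
  assumes "r \<ge> 1" and "0 < \<alpha>" and "\<alpha> \<le> 1"
  shows "\<exists>N::nat. \<forall>n \<ge> N. \<forall>(V :: nat set) (F :: nat set set) (B :: real) (\<gamma> :: real).
     finite V \<longrightarrow> card V = n \<longrightarrow> uniform_hypergraph k V F \<longrightarrow>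
     real (card F) = real n powr r \<longrightarrow>
     B > 0 \<longrightarrow>
     real (wp F V (rnd (\<alpha> * n))) \<le> min (B * n) (real (card F) / 2) \<longrightarrow>
     0 < \<gamma> \<longrightarrow> \<gamma> \<le> 1 \<longrightarrow> real k \<le> sqrt (\<gamma> * n) \<longrightarrow>
     expected_trace F V (rnd (\<gamma> * n)) \<ge>
       (1 / ((8 * k / (\<alpha> * \<gamma>)) ^ nat \<lceil>5 * r\<rceil> * log 2 n))
         * (real (card F) / B powr (1 - log 2 (1 + \<gamma>)))"
proof -
  note r1 = assms(1) and \<alpha> = assms(2,3)
  define R where "R = nat \<lceil>5 * r\<rceil>"
  have R1: "1 \<le> R" unfolding R_def using r1 by linarith
  define q0 where "q0 = (\<alpha> / (2 * real k)) ^ k"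
  define M1 where "M1 = (4 * real k) ^ k / ((8 * real k / \<alpha>) ^ R / (2 * real k) ^ k * q0)"
  define M2 where "M2 = 3 / (\<alpha> / 8 * (8 * real k / \<alpha>) ^ R * q0)"
  define N where "N = nat \<lceil>max (2 powr (max M1 M2)) (4 + (2 * real k + 2) / \<alpha>)\<rceil>"
  show ?thesis
  proof (rule exI[of _ N], intro allI impI)
    fix n :: nat and V :: "nat set" and F :: "nat set set" and B \<gamma> :: real
    assume nN: "N \<le> n" and V: "finite V" and cV: "card V = n" and U: "uniform_hypergraph k V F"
      and X: "real (card F) = real n powr r" and Bpos: "B > 0"
      and wpB: "real (wp F V (rnd (\<alpha> * n))) \<le> min (B * n) (real (card F) / 2)"
      and \<gamma>: "0 < \<gamma>" "\<gamma> \<le> 1" and ksq: "real k \<le> sqrt (\<gamma> * n)"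
    have nN': "max (2 powr (max M1 M2)) (4 + (2 * real k + 2) / \<alpha>) \<le> real n"
      using nN unfolding N_def by linarith
    have n4: "4 \<le> real n" using nN' \<alpha> by (smt (verit) divide_nonneg_pos of_nat_0_le_iff)
    have nk\<alpha>: "2 * real k + 2 \<le> \<alpha> * real n"
    proof -
      have "(2 * real k + 2) / \<alpha> \<le> real n" using nN' \<alpha> by linarith
      then show ?thesis using \<alpha> by (simp add: divide_le_eq mult.commute)
    qed
    have Lge: "max M1 M2 \<le> log 2 n"
      using nN' n4 by (subst le_log_iff) auto
    have n2: "2 \<le> real n" using n4 by simp
    have npos: "0 < n" using n4 by simp
    define s where "s = rnd (\<gamma> * n)"
    define m where "m = rnd (\<alpha> * n)"
    define L where "L = log 2 (real n)"
    define e where "e = 1 - log 2 (1 + \<gamma>)"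
    define T where "T = real n powr ((r - 1) * e)"
    define X where "X = real (card F)"
    define K where "K = 8 * real k / (\<alpha> * \<gamma>)"
    define E where "E = expected_trace F V s"
    have fF: "finite F" using finite_F[OF V U] .
    have Xge: "real n \<le> X"
    proof -
      have "real n powr 1 \<le> real n powr r" using r1 n2 by (intro powr_mono) auto
      then show ?thesis unfolding X_def X using n2 by simp
    qed
    have Fne: "F \<noteq> {}" using Xge n4 unfolding X_def by auto
    have k1: "1 \<le> k"
    proof (rule ccontr)
      assume "\<not> 1 \<le> k"
      then have k0: "k = 0" by simp
      have "F \<subseteq> {{}}"
      proof
        fix x assume "x \<in> F"
        then have "x \<subseteq> V" "card x = 0" using U k0 unfolding uniform_hypergraph_def by auto
        then have "x = {}" using V finite_subset by fastforce
        then show "x \<in> {{}}" by simp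
      qed
      then have "card F \<le> 1" using card_mono[of "{{}}" F] by simp
      then show False using Xge n4 unfolding X_def by simp
    qed
    have kpos: "0 < real k" using k1 by simp
    have \<gamma>n: "0 \<le> \<gamma> * real n" using \<gamma> by simp
    have k2: "real k ^ 2 \<le> \<gamma> * real n"
    proof -
      have "real k ^ 2 \<le> (sqrt (\<gamma> * n)) ^ 2" using ksq by (intro power_mono) auto
      then show ?thesis using \<gamma>n by simp
    qed
    have kk: "real k \<le> real k * real k" using k1 mult_left_mono[of 1 "real k" "real k"] by simp
    have k2': "real k * real k \<le> \<gamma> * real n" using k2 by (simp add: power2_eq_square)
    have k\<gamma>: "real k \<le> \<gamma> * real n" using kk k2' by linarith
    have \<gamma>n1: "1 \<le> \<gamma> * real n"
    proof -
      have "1 \<le> real k" using k1 by simp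
      then show ?thesis using k\<gamma> by linarith
    qed
    have s_lo: "\<gamma> * real n - 1/2 \<le> real s" and s_hi: "real s \<le> \<gamma> * real n + 1/2"
      unfolding s_def using rnd_facts[OF \<gamma>n] by auto
    have sn: "s \<le> n" unfolding s_def using \<gamma> mult_right_mono[of \<gamma> 1 "real n"] by (intro rnd_le) simp
    have ks: "k \<le> s" unfolding s_def using k\<gamma> by (intro rnd_ge) simp
    have s_half: "\<gamma> * real n / 2 \<le> real s" using s_lo \<gamma>n1 by simp
    have \<alpha>n: "0 \<le> \<alpha> * real n" using \<alpha> by simp
    have m_lo: "\<alpha> * real n - 1/2 \<le> real m"
      unfolding m_def using rnd_facts[OF \<alpha>n] by auto
    have mn: "m \<le> n" unfolding m_def using \<alpha> mult_right_mono[of \<alpha> 1 "real n"] by (intro rnd_le) simp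
    have km: "k \<le> m" unfolding m_def using nk\<alpha> by (intro rnd_ge) simp
    have m_half: "\<alpha> * real n / 2 \<le> real m" using m_lo nk\<alpha> by simp
    have cS: "card {I. I \<subseteq> V \<and> card I = s} = n choose s" using n_subsets[OF V, of s] cV by simp
    have cSpos: "0 < real (n choose s)" using sn by simp
    have E_eq: "E = (\<Sum>I\<in>{I. I \<subseteq> V \<and> card I = s}. real (card (trace F I))) / real (n choose s)"
      unfolding E_def expected_trace_def cS by simp
    have q0pos: "0 < q0" unfolding q0_def using \<alpha> kpos by simp
    have q0le: "q0 \<le> 1" unfolding q0_def using \<alpha> kpos k1
      by (intro power_le_one) (auto simp: field_simps)
    have E1: "X * (\<gamma> / (2 * real k)) ^ k \<le> E"
    proof -
      have "real (card F * ((n - k) choose (s - k))) \<le> (\<Sum>I\<in>{I. I \<subseteq> V \<and> card I = s}. real (card (trace F I)))"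
      proof -
        have "card F * ((card V - k) choose (s - k)) = (\<Sum>I\<in>{I. I \<subseteq> V \<and> card I = s}. card (induced F I))"
          using sum_induced[OF V U ks] by simp
        also have "\<dots> \<le> (\<Sum>I\<in>{I. I \<subseteq> V \<and> card I = s}. card (trace F I))"
          by (intro sum_mono induced_le_trace fF)
        finally have h: "card F * ((n - k) choose (s - k)) \<le> (\<Sum>I\<in>{I. I \<subseteq> V \<and> card I = s}. card (trace F I))" using cV by simp
        have "real (card F * ((n - k) choose (s - k))) \<le> real (\<Sum>I\<in>{I. I \<subseteq> V \<and> card I = s}. card (trace F I))"
          using h by (simp only: of_nat_le_iff)
        then show ?thesis by (simp only: of_nat_sum)
      qed
      then have "X * (real ((n - k) choose (s - k)) / real (n choose s)) \<le> E"
        unfolding E_eq X_def using cSpos by (simp add: divide_right_mono field_simps)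
      moreover have "(\<gamma> / (2 * real k)) ^ k \<le> real ((n - k) choose (s - k)) / real (n choose s)"
      proof -
        have "\<gamma> / (2 * real k) \<le> real s / (real k * real n)"
          using s_half kpos npos by (simp add: field_simps)
        then have "(\<gamma> / (2 * real k)) ^ k \<le> (real s / (real k * real n)) ^ k"
          using \<gamma> kpos by (intro power_mono) auto
        also have "\<dots> \<le> real ((n - k) choose (s - k)) / real (n choose s)"
          by (rule ratio_bound[OF ks sn npos])
        finally show ?thesis .
      qed
      moreover have "0 \<le> X" unfolding X_def by simp
      ultimately show ?thesis by (meson mult_left_mono order_trans)
    qed
    have e01: "0 \<le> e" "e \<le> 1" unfolding e_def using \<gamma> by auto
    have Bge: "T * q0 \<le> B powr e"
    proof -
      have wa: "card F * ((n - k) choose (m - k)) \<le> wp F V m * (n choose m)"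
        using wp_avg[OF V U km] cV by simp
      have cmpos: "0 < real (n choose m)" using mn by simp
      have "X * (real ((n - k) choose (m - k)) / real (n choose m)) \<le> real (wp F V m)"
        using wa cmpos unfolding X_def
        by (simp add: field_simps) (metis of_nat_le_iff of_nat_mult)
      moreover have "q0 \<le> real ((n - k) choose (m - k)) / real (n choose m)"
      proof -
        have "\<alpha> / (2 * real k) \<le> real m / (real k * real n)"
          using m_half kpos npos by (simp add: field_simps)
        then have "q0 \<le> (real m / (real k * real n)) ^ k"
          unfolding q0_def using \<alpha> kpos by (intro power_mono) auto
        also have "\<dots> \<le> real ((n - k) choose (m - k)) / real (n choose m)"
          by (rule ratio_bound[OF km mn npos])
        finally show ?thesis .
      qed
      moreover have "real (wp F V m) \<le> B * real n" using wpB unfolding m_def by simp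
      ultimately have "X * q0 \<le> B * real n" using Xge n2
        by (smt (verit, best) mult_left_mono)
      then have Bq: "real n powr (r - 1) * q0 \<le> B"
      proof -
        have "X = real n powr (r - 1) * real n" unfolding X_def X using n2
          by (simp add: powr_diff)
        then show ?thesis using \<open>X * q0 \<le> B * real n\<close> n2 by (simp add: mult_ac)
      qed
      have "(real n powr (r - 1) * q0) powr e \<le> B powr e"
        using Bq e01 q0pos n2 by (intro powr_mono2) auto
      moreover have "(real n powr (r - 1) * q0) powr e = T * q0 powr e"
        unfolding T_def using n2 q0pos by (simp add: powr_mult powr_powr)
      moreover have "q0 \<le> q0 powr e"
        using powr_mono'[of e 1 q0] e01 q0pos q0le by simp
      moreover have "0 \<le> T" unfolding T_def by simp
      ultimately show ?thesis by (smt (verit) mult_left_mono)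
    qed
    have E2: "\<alpha> * \<gamma> * real n / 8 \<le> E" if g4: "\<gamma> < 1 / (4 * real k)"
    proof -
      have s1: "1 \<le> s" using ks k1 by simp
      have kn: "k \<le> n" using ks sn by simp
      have small: "2 * (k - 1) * (s - 1) \<le> n - 1"
      proof -
        have "real (s - 1) \<le> \<gamma> * real n" using s_hi s1 by (simp add: of_nat_diff)
        moreover have "4 * real k * \<gamma> < 1" using g4 kpos by (simp add: field_simps)
        ultimately have "2 * real k * real (s - 1) \<le> real n / 2"
        proof -
          assume a: "real (s - 1) \<le> \<gamma> * real n" "4 * real k * \<gamma> < 1"
          have "2 * real k * real (s - 1) \<le> 2 * real k * (\<gamma> * real n)"
            using a(1) kpos by simp
          also have "\<dots> = (4 * real k * \<gamma>) * real n / 2" by simp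
          also have "\<dots> \<le> 1 * real n / 2" using a(2) by (intro divide_right_mono mult_right_mono) auto
          finally show ?thesis by simp
        qed
        moreover have "real (2 * (k - 1) * (s - 1)) \<le> 2 * real k * real (s - 1)"
          using k1 mult_right_mono[of "2 * real k - 2" "2 * real k" "real (s - 1)"] by (simp add: of_nat_diff)
        moreover have "real n / 2 \<le> real (n - 1)" using n4 by (simp add: of_nat_diff)
        ultimately have "real (2 * (k - 1) * (s - 1)) \<le> real (n - 1)" by linarith
        then show ?thesis by (simp only: of_nat_le_iff)
      qed
      have p2: "s * (n choose s) \<le> 2 * n * ((n - k) choose (s - 1))"
        by (rule P2_bound[OF s1 sn kn k1 small])
      have mU: "m < card (\<Union>F)"
        using supp_big[OF V U _ _ Fne, of m] mn cV wpB unfolding m_def by simp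
      have "real (card (\<Union>F) * ((n - k) choose (s - 1))) \<le> (\<Sum>I\<in>{I. I \<subseteq> V \<and> card I = s}. real (card (trace F I)))"
      proof -
        have h: "card (\<Union>F) * ((n - k) choose (s - 1)) \<le> (\<Sum>I\<in>{I. I \<subseteq> V \<and> card I = s}. card (trace F I))"
          using sum_pt[OF V U s1] cV by simp
        have "real (card (\<Union>F) * ((n - k) choose (s - 1))) \<le> real (\<Sum>I\<in>{I. I \<subseteq> V \<and> card I = s}. card (trace F I))"
          using h by (simp only: of_nat_le_iff)
        then show ?thesis by (simp only: of_nat_sum)
      qed
      then have "real (card (\<Union>F)) * (real ((n - k) choose (s - 1)) / real (n choose s)) \<le> E"
        unfolding E_eq using cSpos by (simp add: divide_right_mono field_simps)
      moreover have "real s / (2 * real n) \<le> real ((n - k) choose (s - 1)) / real (n choose s)"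
      proof -
        have "real s * real (n choose s) \<le> 2 * real n * real ((n - k) choose (s - 1))"
          using p2 by (metis of_nat_le_iff of_nat_mult of_nat_numeral)
        then show ?thesis using cSpos npos by (simp add: field_simps)
      qed
      moreover have "\<alpha> * real n / 2 \<le> real (card (\<Union>F))" using m_half mU by simp
      moreover have "\<alpha> * \<gamma> * real n / 8 \<le> (\<alpha> * real n / 2) * (real s / (2 * real n))"
      proof -
        have "(\<alpha> * real n / 2) * (\<gamma> * real n / 2 / (2 * real n)) \<le> (\<alpha> * real n / 2) * (real s / (2 * real n))"
          using s_half \<alpha> npos by (intro mult_left_mono divide_right_mono) auto
        moreover have "(\<alpha> * real n / 2) * (\<gamma> * real n / 2 / (2 * real n)) = \<alpha> * \<gamma> * real n / 8"
          using npos by (simp add: field_simps)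
        ultimately show ?thesis by linarith
      qed
      moreover have "0 \<le> real s / (2 * real n)" by simp
      moreover have "0 \<le> \<alpha> * real n / 2" using \<alpha> by simp
      ultimately show ?thesis
        by (smt (verit, best) mult_mono)
    qed
    have Lge': "M1 \<le> L" "M2 \<le> L" using Lge unfolding L_def by auto
    have an: "1 \<le> (\<gamma> / (2 * real k)) ^ k * (K ^ R * L) * (T * q0)
      \<or> (\<gamma> < 1 / (4 * real k) \<and> real n powr r \<le> (\<alpha> * \<gamma> * real n / 8) * (K ^ R * L) * (T * q0))"
      unfolding K_def T_def e_def
      by (rule analytic[OF k1 R1 r1 \<alpha> q0_def n2 refl Lge'[unfolded M1_def M2_def L_def] \<gamma>, folded L_def])
    have Lpos: "0 < L" unfolding L_def using n2 by simp
    have Kpos: "0 < K" unfolding K_def using kpos \<alpha> \<gamma> by simp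
    have Tpos: "0 < T" unfolding T_def using n2 by simp
    define D where "D = K ^ R * L * (T * q0)"
    have Dpos: "0 < D" unfolding D_def using Kpos Lpos Tpos q0pos by simp
    have Xnn: "0 \<le> X" unfolding X_def by simp
    have rhs: "(1 / (K ^ R * L)) * (X / B powr e) \<le> X / D"
    proof -
      have "X / B powr e \<le> X / (T * q0)"
        using Bge Xnn Tpos q0pos Bpos by (intro divide_left_mono) auto
      then have "(1 / (K ^ R * L)) * (X / B powr e) \<le> (1 / (K ^ R * L)) * (X / (T * q0))"
        using Kpos Lpos by (intro mult_left_mono) auto
      then show ?thesis unfolding D_def by (simp add: field_simps)
    qed
    have "X / D \<le> E"
      using an
    proof
      assume a: "1 \<le> (\<gamma> / (2 * real k)) ^ k * (K ^ R * L) * (T * q0)"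
      have "X / D \<le> X * (\<gamma> / (2 * real k)) ^ k"
      proof -
        have "X \<le> X * ((\<gamma> / (2 * real k)) ^ k * D)"
        proof -
          have "1 \<le> (\<gamma> / (2 * real k)) ^ k * D" using a unfolding D_def by (simp add: mult_ac)
          then show ?thesis using mult_left_mono[of 1 "(\<gamma> / (2 * real k)) ^ k * D" X] Xnn by simp
        qed
        then show ?thesis using Dpos by (simp add: divide_le_eq mult_ac)
      qed
      then show ?thesis using E1 by simp
    next
      assume a: "\<gamma> < 1 / (4 * real k) \<and> real n powr r \<le> (\<alpha> * \<gamma> * real n / 8) * (K ^ R * L) * (T * q0)"
      have "X / D \<le> \<alpha> * \<gamma> * real n / 8"
        using a Dpos unfolding D_def X_def X by (simp add: divide_le_eq mult_ac)
      moreover have "\<alpha> * \<gamma> * real n / 8 \<le> E" using E2 a by blast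
      ultimately show ?thesis by linarith
    qed
    then have fin: "(1 / (K ^ R * L)) * (X / B powr e) \<le> E" using rhs by linarith
    then show "expected_trace F V (rnd (\<gamma> * n)) \<ge>
       (1 / ((8 * k / (\<alpha> * \<gamma>)) ^ nat \<lceil>5 * r\<rceil> * log 2 n))
         * (real (card F) / B powr (1 - log 2 (1 + \<gamma>)))"
      unfolding K_def R_def L_def X_def e_def E_def s_def by simp
  qed
qed


end
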